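(* Let $(\mathcal{L},[\cdot,\cdot,\cdot]_{\mathcal{L}})$ be a (right) $3$-Leibniz algebra over a field $\mathbb{K}$ and $\overline{\mathcal{L}}=\mathbb{K}\oplus\mathcal{L}$. Then the linear map $R:(\overline{\mathcal{L}}\otimes\overline{\mathcal{L}})^{\otimes2}\to(\overline{\mathcal{L}}\otimes\overline{\mathcal{L}})^{\otimes 2}$ given by $R\big((a_1,x_1)\otimes(a_2,x_2)\otimes(b_1,y_1)\otimes(b_2,y_2)\big)=(b_1,y_1)\otimes(b_2,y_2)\otimes(a_1,x_1)\otimes(a_2,x_2)+(1,0)\otimes(1,0)\otimes\big((0,[x_1,y_1,y_2]_{\mathcal{L}})\otimes(a_2,x_2)+(a_1,x_1)\otimes(0,[x_2,y_1,y_2]_{\mathcal{L}})\big)$ is a solution of the Yang-Baxter equation on $V=\overline{\mathcal{L}}\otimes\overline{\mathcal{L}}$.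
   Context: A (right) $3$-Leibniz algebra is a vector space $\mathcal{L}$ with a trilinear map $[\cdot,\cdot,\cdot]_{\mathcal{L}}$ such that $[[x_1,x_2,x_3]_{\mathcal{L}},y_1,y_2]_{\mathcal{L}}=[[x_1,y_1,y_2]_{\mathcal{L}},x_2,x_3]_{\mathcal{L}}+[x_1,[x_2,y_1,y_2]_{\mathcal{L}},x_3]_{\mathcal{L}}+[x_1,x_2,[x_3,y_1,y_2]_{\mathcal{L}}]_{\mathcal{L}}$. A solution of the Yang-Baxter equation on a vector space $V$ is an invertible linear map $R:V\otimes V\to V\otimes V$ with $(R\otimes\mathrm{Id}_V)(\mathrm{Id}_V\otimes R)(R\otimes\mathrm{Id}_V)=(\mathrm{Id}_V\otimes R)(R\otimes\mathrm{Id}_V)(\mathrm{Id}_V\otimes R)$. *)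

theory Defs
  imports "HOL-Library.Poly_Mapping"
begin

text \<open>Vector spaces over a field 'k are modelled as free vector spaces
  'i =>0 'k (finitely supported functions on a basis index set 'i).\<close>

definition smult :: "'k::field \<Rightarrow> ('i \<Rightarrow>\<^sub>0 'k) \<Rightarrow> ('i \<Rightarrow>\<^sub>0 'k)" where
  "smult c u = Poly_Mapping.map (\<lambda>v. c * v) u"

definition klinear :: "(('i \<Rightarrow>\<^sub>0 'k::field) \<Rightarrow> ('j \<Rightarrow>\<^sub>0 'k)) \<Rightarrow> bool" where
  "klinear f \<longleftrightarrow> (\<forall>u v. f (u + v) = f u + f v) \<and> (\<forall>c u. f (smult c u) = smult c (f u))"

definition trilinear ::
  "(('b \<Rightarrow>\<^sub>0 'k::field) \<Rightarrow> ('b \<Rightarrow>\<^sub>0 'k) \<Rightarrow> ('b \<Rightarrow>\<^sub>0 'k) \<Rightarrow> ('b \<Rightarrow>\<^sub>0 'k)) \<Rightarrow> bool" where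
  "trilinear br \<longleftrightarrow>
     (\<forall>y z. klinear (\<lambda>x. br x y z)) \<and> (\<forall>x z. klinear (\<lambda>y. br x y z)) \<and>
     (\<forall>x y. klinear (\<lambda>z. br x y z))"

definition leibniz3 ::
  "(('b \<Rightarrow>\<^sub>0 'k::field) \<Rightarrow> ('b \<Rightarrow>\<^sub>0 'k) \<Rightarrow> ('b \<Rightarrow>\<^sub>0 'k) \<Rightarrow> ('b \<Rightarrow>\<^sub>0 'k)) \<Rightarrow> bool" where
  "leibniz3 br \<longleftrightarrow> trilinear br \<and>
     (\<forall>x1 x2 x3 y1 y2. br (br x1 x2 x3) y1 y2 =
        br (br x1 y1 y2) x2 x3 + br x1 (br x2 y1 y2) x3 + br x1 x2 (br x3 y1 y2))"

text \<open>\<open>\<overline>L = K \<oplus> L\<close> has basis indexed by 'b option: None \<mapsto> (1,0),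
  Some b \<mapsto> (0, e_b). Coordinates of an element (a,x) of \<open>\<overline>L\<close>:\<close>
fun coord :: "'k::field \<times> ('b \<Rightarrow>\<^sub>0 'k) \<Rightarrow> 'b option \<Rightarrow> 'k" where
  "coord (a, x) None = a"
| "coord (a, x) (Some b) = Poly_Mapping.lookup x b"

fun supp :: "'k::field \<times> ('b \<Rightarrow>\<^sub>0 'k) \<Rightarrow> 'b option set" where
  "supp (a, x) = insert None (Some ` Poly_Mapping.keys x)"

text \<open>V = \<open>\<overline>L \<otimes> \<overline>L\<close> has basis indexed by 'b option \<times> 'b option;
  V \<otimes> V by pairs of those.\<close>
definition t4 :: "'k::field \<times> ('b \<Rightarrow>\<^sub>0 'k) \<Rightarrow> 'k \<times> ('b \<Rightarrow>\<^sub>0 'k) \<Rightarrow>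
    'k \<times> ('b \<Rightarrow>\<^sub>0 'k) \<Rightarrow> 'k \<times> ('b \<Rightarrow>\<^sub>0 'k) \<Rightarrow>
    (('b option \<times> 'b option) \<times> ('b option \<times> 'b option)) \<Rightarrow>\<^sub>0 'k" where
  "t4 u1 u2 u3 u4 =
     (\<Sum>i1\<in>supp u1. \<Sum>i2\<in>supp u2. \<Sum>i3\<in>supp u3. \<Sum>i4\<in>supp u4.
        Poly_Mapping.single ((i1, i2), (i3, i4))
          (coord u1 i1 * coord u2 i2 * coord u3 i3 * coord u4 i4))"

definition tensor_f_id :: "(('v \<times> 'v \<Rightarrow>\<^sub>0 'k::field) \<Rightarrow> ('v \<times> 'v \<Rightarrow>\<^sub>0 'k)) \<Rightarrow>
    ('v \<times> 'v \<times> 'v \<Rightarrow>\<^sub>0 'k) \<Rightarrow> ('v \<times> 'v \<times> 'v \<Rightarrow>\<^sub>0 'k)" where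
  "tensor_f_id f t =
     (\<Sum>(p, q, r)\<in>Poly_Mapping.keys t. smult (Poly_Mapping.lookup t (p, q, r))
        (let s = f (Poly_Mapping.single (p, q) 1) in
         \<Sum>(p', q')\<in>Poly_Mapping.keys s. Poly_Mapping.single (p', q', r) (Poly_Mapping.lookup s (p', q'))))"

definition tensor_id_f :: "(('v \<times> 'v \<Rightarrow>\<^sub>0 'k::field) \<Rightarrow> ('v \<times> 'v \<Rightarrow>\<^sub>0 'k)) \<Rightarrow>
    ('v \<times> 'v \<times> 'v \<Rightarrow>\<^sub>0 'k) \<Rightarrow> ('v \<times> 'v \<times> 'v \<Rightarrow>\<^sub>0 'k)" where
  "tensor_id_f f t =
     (\<Sum>(p, q, r)\<in>Poly_Mapping.keys t. smult (Poly_Mapping.lookup t (p, q, r))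
        (let s = f (Poly_Mapping.single (q, r) 1) in
         \<Sum>(q', r')\<in>Poly_Mapping.keys s. Poly_Mapping.single (p, q', r') (Poly_Mapping.lookup s (q', r'))))"

definition yang_baxter :: "(('v \<times> 'v \<Rightarrow>\<^sub>0 'k::field) \<Rightarrow> ('v \<times> 'v \<Rightarrow>\<^sub>0 'k)) \<Rightarrow> bool" where
  "yang_baxter R \<longleftrightarrow> klinear R \<and> bij R \<and>
     tensor_f_id R \<circ> tensor_id_f R \<circ> tensor_f_id R =
     tensor_id_f R \<circ> tensor_f_id R \<circ> tensor_id_f R"

end

theory Submission
  imports Defs
begin

lemma lookup_smult[simp]: "Poly_Mapping.lookup (smult c u) k = c * Poly_Mapping.lookup u k"
  by (simp add: smult_def map.rep_eq when_def)

definition pt :: "('a \<Rightarrow>\<^sub>0 'k::field) \<Rightarrow> ('c \<Rightarrow>\<^sub>0 'k) \<Rightarrow> ('a \<times> 'c \<Rightarrow>\<^sub>0 'k)" where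
  "pt s t = Abs_poly_mapping (\<lambda>(a,c). Poly_Mapping.lookup s a * Poly_Mapping.lookup t c)"

lemma lookup_pt[simp]: "Poly_Mapping.lookup (pt s t) (a,c) = Poly_Mapping.lookup s a * Poly_Mapping.lookup t c"
proof -
  have "{x. (\<lambda>(a,c). Poly_Mapping.lookup s a * Poly_Mapping.lookup t c) x \<noteq> 0} \<subseteq> Poly_Mapping.keys s \<times> Poly_Mapping.keys t"
    by (auto simp: in_keys_iff)
  hence "finite {x. (\<lambda>(a,c). Poly_Mapping.lookup s a * Poly_Mapping.lookup t c) x \<noteq> 0}"
    by (rule finite_subset) auto
  thus ?thesis unfolding pt_def by simp
qed

definition tpL :: "('a \<times> 'c \<Rightarrow>\<^sub>0 'k::field) \<Rightarrow> ('d \<Rightarrow>\<^sub>0 'k) \<Rightarrow> ('a \<times> 'c \<times> 'd \<Rightarrow>\<^sub>0 'k)" where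
  "tpL s t = Abs_poly_mapping (\<lambda>(a,c,d). Poly_Mapping.lookup s (a,c) * Poly_Mapping.lookup t d)"

lemma lookup_tpL[simp]: "Poly_Mapping.lookup (tpL s t) (a,c,d) = Poly_Mapping.lookup s (a,c) * Poly_Mapping.lookup t d"
proof -
  have "{x. (\<lambda>(a,c,d). Poly_Mapping.lookup s (a,c) * Poly_Mapping.lookup t d) x \<noteq> 0} \<subseteq> (\<lambda>(x,d). (fst x, snd x, d)) ` (Poly_Mapping.keys s \<times> Poly_Mapping.keys t)"
    by (force simp: in_keys_iff image_iff)
  hence "finite {x. (\<lambda>(a,c,d). Poly_Mapping.lookup s (a,c) * Poly_Mapping.lookup t d) x \<noteq> 0}"
    by (rule finite_subset) auto
  thus ?thesis unfolding tpL_def by simp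
qed

definition lb :: "'k::field \<times> ('b \<Rightarrow>\<^sub>0 'k) \<Rightarrow> ('b option \<Rightarrow>\<^sub>0 'k)" where
  "lb u = Abs_poly_mapping (coord u)"

lemma coord_nz: "coord u i \<noteq> 0 \<Longrightarrow> i \<in> supp u"
  by (cases u; cases i) (auto simp: in_keys_iff)

lemma lookup_lb[simp]: "Poly_Mapping.lookup (lb u) = coord u"
proof -
  have "finite (supp u)" by (cases u) auto
  hence "finite {x. coord u x \<noteq> 0}"
    by (rule finite_subset[rotated]) (auto dest: coord_nz)
  thus ?thesis unfolding lb_def by simp
qed

definition t2 where "t2 u v = pt (lb u) (lb v)"

lemma lookup_t2[simp]: "Poly_Mapping.lookup (t2 u v) (i,j) = coord u i * coord v j"
  by (simp add: t2_def)

lemma sum_if_coord: "finite (supp u) \<Longrightarrow> (\<Sum>i\<in>supp u. if i = k then f i else 0) = (if k \<in> supp u then f k else 0)"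
  by (simp add: sum.delta')

lemma fin: "finite (supp u)" by (cases u) auto
lemma z: "i \<notin> supp u \<Longrightarrow> coord u i = 0" using coord_nz by blast

lemma conj_if0: "(if A \<and> B then f else 0) = (if A then if B then f else 0 else 0)" by simp
lemma sum_if_out: "(\<Sum>y\<in>S. if P then f y else 0) = (if P then sum f S else 0)" by simp

lemma t4_eq: "t4 u1 u2 u3 u4 = pt (t2 u1 u2) (t2 u3 u4)"
proof (rule poly_mapping_eqI)
  fix k
  show "Poly_Mapping.lookup (t4 u1 u2 u3 u4) k = Poly_Mapping.lookup (pt (t2 u1 u2) (t2 u3 u4)) k"
  proof -
    obtain i1 i2 i3 i4 where fields: "k = ((i1,i2),(i3,i4))" by (metis prod.exhaust)
    show ?thesis
      unfolding t4_def fields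
      apply (simp add: lookup_sum lookup_single when_def fin z conj_if0 sum_if_out cong: if_cong del: sum.delta)
      by (simp add: fin z)
  qed
qed

definition addf :: "(('a \<Rightarrow>\<^sub>0 'k::field) \<Rightarrow> ('c \<Rightarrow>\<^sub>0 'k)) \<Rightarrow> bool" where
  "addf g \<longleftrightarrow> (\<forall>u v. g (u + v) = g u + g v)"

lemma addf_0: "addf g \<Longrightarrow> g 0 = 0"
  unfolding addf_def by (metis add_cancel_right_right add_0)

lemma addf_sum: "addf g \<Longrightarrow> g (sum f A) = (\<Sum>a\<in>A. g (f a))"
proof (induction A rule: infinite_finite_induct)
  case (infinite A) thus ?case by (simp add: addf_0)
next
  case empty thus ?case by (simp add: addf_0)
next
  case (insert x F) thus ?case by (simp add: addf_def)
qed

lemma decomp: "T = (\<Sum>k\<in>Poly_Mapping.keys T. Poly_Mapping.single k (Poly_Mapping.lookup T k))"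
  by (rule poly_mapping_eqI) (simp add: lookup_sum lookup_single when_def in_keys_iff)

lemma ext_add:
  assumes "addf g" "addf h" "\<And>k c. g (Poly_Mapping.single k c) = h (Poly_Mapping.single k c)"
  shows "g u = h u"
proof -
  have "g u = g (\<Sum>k\<in>Poly_Mapping.keys u. Poly_Mapping.single k (Poly_Mapping.lookup u k))" using decomp by metis
  also have "\<dots> = h (\<Sum>k\<in>Poly_Mapping.keys u. Poly_Mapping.single k (Poly_Mapping.lookup u k))"
    using assms by (simp add: addf_sum)
  finally show ?thesis using decomp by metis
qed

lemma addf_comp: "addf g \<Longrightarrow> addf h \<Longrightarrow> addf (g \<circ> h)" by (simp add: addf_def)

lemma klinear_addf: "klinear f \<Longrightarrow> addf f" by (simp add: klinear_def addf_def)

lemma smult_single: "smult c (Poly_Mapping.single k d) = Poly_Mapping.single k (c * d)"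
  by (rule poly_mapping_eqI) (simp add: lookup_single when_def)

lemma klinear_single: "klinear f \<Longrightarrow> f (Poly_Mapping.single k (c * d)) = smult c (f (Poly_Mapping.single k d))"
  by (metis klinear_def smult_single)

lemma sum_keys_add:
  assumes "\<And>k. G k 0 = 0" "\<And>k a b. G k (a+b) = G k a + G k b"
  shows "(\<Sum>k\<in>Poly_Mapping.keys (S+T). G k (Poly_Mapping.lookup (S+T) k)) =
    (\<Sum>k\<in>Poly_Mapping.keys S. G k (Poly_Mapping.lookup S k)) + (\<Sum>k\<in>Poly_Mapping.keys T. G k (Poly_Mapping.lookup T k))"
proof -
  let ?U = "Poly_Mapping.keys S \<union> Poly_Mapping.keys T"
  have fU: "finite ?U" by simp
  have e: "(\<Sum>k\<in>Poly_Mapping.keys X. G k (Poly_Mapping.lookup X k)) = (\<Sum>k\<in>?U. G k (Poly_Mapping.lookup X k))"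
    if "Poly_Mapping.keys X \<subseteq> ?U" for X
    by (rule sum.mono_neutral_left[OF fU that]) (auto simp: in_keys_iff assms(1))
  have "Poly_Mapping.keys (S+T) \<subseteq> ?U" by (rule keys_add)
  then have "(\<Sum>k\<in>Poly_Mapping.keys (S+T). G k (Poly_Mapping.lookup (S+T) k)) = (\<Sum>k\<in>?U. G k (Poly_Mapping.lookup (S+T) k))"
    by (rule e)
  also have "\<dots> = (\<Sum>k\<in>?U. G k (Poly_Mapping.lookup S k)) + (\<Sum>k\<in>?U. G k (Poly_Mapping.lookup T k))"
    by (simp add: lookup_add assms(2) sum.distrib)
  also have "\<dots> = (\<Sum>k\<in>Poly_Mapping.keys S. G k (Poly_Mapping.lookup S k)) + (\<Sum>k\<in>Poly_Mapping.keys T. G k (Poly_Mapping.lookup T k))"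
    by (simp add: e)
  finally show ?thesis .
qed

definition Gf where
  "Gf f k c = smult c (let s = f (Poly_Mapping.single (fst k, fst (snd k)) 1) in
         \<Sum>(p', q')\<in>Poly_Mapping.keys s. Poly_Mapping.single (p', q', snd (snd k)) (Poly_Mapping.lookup s (p', q')))"

definition Gg where
  "Gg f k c = smult c (let s = f (Poly_Mapping.single (snd k) 1) in
         \<Sum>(q', r')\<in>Poly_Mapping.keys s. Poly_Mapping.single (fst k, q', r') (Poly_Mapping.lookup s (q', r')))"

lemma tfi_eq: "tensor_f_id f t = (\<Sum>k\<in>Poly_Mapping.keys t. Gf f k (Poly_Mapping.lookup t k))"
  unfolding tensor_f_id_def Gf_def by (rule sum.cong) auto

lemma tif_eq: "tensor_id_f f t = (\<Sum>k\<in>Poly_Mapping.keys t. Gg f k (Poly_Mapping.lookup t k))"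
  unfolding tensor_id_f_def Gg_def by (rule sum.cong) auto

lemma smult_0[simp]: "smult 0 u = 0" by (rule poly_mapping_eqI) simp
lemma smult_add_left: "smult (a+b) u = smult a u + smult b u" by (rule poly_mapping_eqI) (simp add: lookup_add algebra_simps)
lemma smult_add_right: "smult c (u + v) = smult c u + smult c v" by (rule poly_mapping_eqI) (simp add: lookup_add algebra_simps)

lemma addf_tfi: "addf (tensor_f_id f)"
  unfolding addf_def tfi_eq
  by (intro allI sum_keys_add) (simp_all add: Gf_def smult_add_left)

lemma addf_tif: "addf (tensor_id_f f)"
  unfolding addf_def tif_eq
  by (intro allI sum_keys_add) (simp_all add: Gg_def smult_add_left)

lemma tpL_add1: "tpL (x + x') y = tpL x y + tpL x' y"
  by (rule poly_mapping_eqI) (auto simp: lookup_add algebra_simps)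
lemma tpL_add2: "tpL y (x + x') = tpL y x + tpL y x'"
  by (rule poly_mapping_eqI) (auto simp: lookup_add algebra_simps)
lemma pt_add1: "pt (x + x') y = pt x y + pt x' y"
  by (rule poly_mapping_eqI) (auto simp: lookup_add algebra_simps)
lemma pt_add2: "pt y (x + x') = pt y x + pt y x'"
  by (rule poly_mapping_eqI) (auto simp: lookup_add algebra_simps)
lemma tpL_0[simp]: "tpL 0 y = 0" "tpL y' 0 = 0"
  by (rule poly_mapping_eqI, auto)+
lemma pt_0[simp]: "pt 0 y = 0" "pt y' 0 = 0"
  by (rule poly_mapping_eqI, auto)+

lemma tpL_smult: "tpL (smult d s) (Poly_Mapping.single r 1) = tpL s (Poly_Mapping.single r d)"
  by (rule poly_mapping_eqI) (auto simp: lookup_single when_def split: if_splits)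
lemma pt_smult: "pt (Poly_Mapping.single r 1) (smult d s) = pt (Poly_Mapping.single r d) s"
  by (rule poly_mapping_eqI) (auto simp: lookup_single when_def split: if_splits)
lemma tpL_single: "tpL (Poly_Mapping.single (p,q) c) (Poly_Mapping.single r d) = Poly_Mapping.single (p,q,r) (c*d)"
  by (rule poly_mapping_eqI) (auto simp: lookup_single when_def split: if_splits)
lemma pt_single: "pt (Poly_Mapping.single p c) (Poly_Mapping.single qr d) = Poly_Mapping.single (p,qr) (c*d)"
  by (rule poly_mapping_eqI) (auto simp: lookup_single when_def split: if_splits)

lemma inner_L: "(\<Sum>(p', q')\<in>Poly_Mapping.keys s. Poly_Mapping.single (p', q', r) (Poly_Mapping.lookup s (p', q'))) = tpL s (Poly_Mapping.single r 1)"
proof (rule poly_mapping_eqI)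
  fix k :: "'a \<times> 'b \<times> 'c"
  obtain a b d where k: "k = (a,b,d)" by (metis prod.exhaust)
  have "(\<Sum>(p', q')\<in>Poly_Mapping.keys s. Poly_Mapping.single (p', q', r) (Poly_Mapping.lookup s (p', q'))) =
     (\<Sum>x\<in>Poly_Mapping.keys s. Poly_Mapping.single (fst x, snd x, r) (Poly_Mapping.lookup s x))"
    by (rule sum.cong) auto
  moreover have "Poly_Mapping.lookup (\<Sum>x\<in>Poly_Mapping.keys s. Poly_Mapping.single (fst x, snd x, r) (Poly_Mapping.lookup s x)) k
     = (\<Sum>x\<in>Poly_Mapping.keys s. if x = (a,b) then (if r = d then Poly_Mapping.lookup s x else 0) else 0)"
    unfolding lookup_sum k by (rule sum.cong) (auto simp: lookup_single when_def split: if_splits)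
  ultimately show "Poly_Mapping.lookup (\<Sum>(p', q')\<in>Poly_Mapping.keys s. Poly_Mapping.single (p', q', r) (Poly_Mapping.lookup s (p', q'))) k = Poly_Mapping.lookup (tpL s (Poly_Mapping.single r 1)) k"
    by (simp add: k lookup_single when_def sum.delta' in_keys_iff)
qed

lemma inner_R: "(\<Sum>(q', r')\<in>Poly_Mapping.keys s. Poly_Mapping.single (p, q', r') (Poly_Mapping.lookup s (q', r'))) = pt (Poly_Mapping.single p 1) s"
proof (rule poly_mapping_eqI)
  fix k :: "'a \<times> 'b \<times> 'c"
  obtain a b d where k: "k = (a,b,d)" by (metis prod.exhaust)
  have "(\<Sum>(q', r')\<in>Poly_Mapping.keys s. Poly_Mapping.single (p, q', r') (Poly_Mapping.lookup s (q', r'))) =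
     (\<Sum>x\<in>Poly_Mapping.keys s. Poly_Mapping.single (p, x) (Poly_Mapping.lookup s x))"
    by (rule sum.cong) auto
  moreover have "Poly_Mapping.lookup (\<Sum>x\<in>Poly_Mapping.keys s. Poly_Mapping.single (p, x) (Poly_Mapping.lookup s x)) k
     = (\<Sum>x\<in>Poly_Mapping.keys s. if x = (b,d) then (if p = a then Poly_Mapping.lookup s x else 0) else 0)"
    unfolding lookup_sum k by (rule sum.cong) (auto simp: lookup_single when_def split: if_splits)
  ultimately show "Poly_Mapping.lookup (\<Sum>(q', r')\<in>Poly_Mapping.keys s. Poly_Mapping.single (p, q', r') (Poly_Mapping.lookup s (q', r'))) k = Poly_Mapping.lookup (pt (Poly_Mapping.single p 1) s) k"
    by (simp add: k lookup_single when_def sum.delta' in_keys_iff)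
qed

lemma inner_R': fixes s :: "('a \<times> 'b) \<Rightarrow>\<^sub>0 'k::field" shows "(\<Sum>x\<in>Poly_Mapping.keys s. Poly_Mapping.single (p, x) (Poly_Mapping.lookup s x)) = pt (Poly_Mapping.single p 1) s"
  using inner_R[of p s] by (simp add: case_prod_beta')

lemma tfi_single: assumes "klinear f"
  shows "tensor_f_id f (Poly_Mapping.single (p,q,r) c) = tpL (f (Poly_Mapping.single (p,q) c)) (Poly_Mapping.single r 1)"
proof (cases "c = 0")
  case True thus ?thesis using addf_0[OF klinear_addf[OF assms]] by (simp add: tfi_eq)
next
  case False
  have "f (Poly_Mapping.single (p,q) c) = smult c (f (Poly_Mapping.single (p,q) 1))"
    using klinear_single[OF assms, of "(p,q)" c 1] by simp
  moreover have "smult c (tpL s e) = tpL (smult c s) e" for s e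
    by (rule poly_mapping_eqI) (auto simp: algebra_simps)
  ultimately show ?thesis using False by (simp add: tfi_eq Gf_def inner_L)
qed

lemma tif_single: assumes "klinear f"
  shows "tensor_id_f f (Poly_Mapping.single (p,q,r) c) = pt (Poly_Mapping.single p 1) (f (Poly_Mapping.single (q,r) c))"
proof (cases "c = 0")
  case True thus ?thesis using addf_0[OF klinear_addf[OF assms]] by (simp add: tif_eq)
next
  case False
  have "f (Poly_Mapping.single (q,r) c) = smult c (f (Poly_Mapping.single (q,r) 1))"
    using klinear_single[OF assms, of "(q,r)" c 1] by simp
  moreover have "smult c (pt e s) = pt e (smult c s)" for s e
    by (rule poly_mapping_eqI) (auto simp: algebra_simps)
  ultimately show ?thesis using False by (simp add: tif_eq Gg_def inner_R')
qed

lemma tfi_tpL: fixes x :: "('v \<times> 'v) \<Rightarrow>\<^sub>0 'k::field" and y :: "'v \<Rightarrow>\<^sub>0 'k"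
  assumes f: "klinear f"
  shows "tensor_f_id f (tpL x y) = tpL (f x) y"
proof -
  have af: "addf f" by (rule klinear_addf[OF f])
  show ?thesis
  proof (rule ext_add[where g="\<lambda>x. tensor_f_id f (tpL x y)" and h="\<lambda>x. tpL (f x) y"])
    show "addf (\<lambda>x. tensor_f_id f (tpL x y))"
      using addf_tfi[of f] unfolding addf_def by (simp add: tpL_add1)
    show "addf (\<lambda>x. tpL (f x) y)"
      using af unfolding addf_def by (simp add: tpL_add1)
    fix k :: "'v \<times> 'v" and c
    obtain p q where k: "k = (p,q)" by (metis prod.exhaust)
    show "tensor_f_id f (tpL (Poly_Mapping.single k c) y) = tpL (f (Poly_Mapping.single k c)) y"
    proof (rule ext_add[where g="\<lambda>y. tensor_f_id f (tpL (Poly_Mapping.single k c) y)" and h="\<lambda>y. tpL (f (Poly_Mapping.single k c)) y"])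
      show "addf (\<lambda>y. tensor_f_id f (tpL (Poly_Mapping.single k c) y))"
        using addf_tfi[of f] unfolding addf_def by (simp add: tpL_add2)
      show "addf (\<lambda>y. tpL (f (Poly_Mapping.single k c)) y)"
        unfolding addf_def by (simp add: tpL_add2)
      fix r d
      have "f (Poly_Mapping.single (p,q) (d * c)) = smult d (f (Poly_Mapping.single (p,q) c))"
        by (rule klinear_single[OF f])
      then show "tensor_f_id f (tpL (Poly_Mapping.single k c) (Poly_Mapping.single r d)) = tpL (f (Poly_Mapping.single k c)) (Poly_Mapping.single r d)"
        by (simp add: k tpL_single tfi_single[OF f] mult.commute tpL_smult)
    qed
  qed
qed

lemma tif_pt: fixes y :: "('v \<times> 'v) \<Rightarrow>\<^sub>0 'k::field" and x :: "'v \<Rightarrow>\<^sub>0 'k"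
  assumes f: "klinear f"
  shows "tensor_id_f f (pt x y) = pt x (f y)"
proof -
  have af: "addf f" by (rule klinear_addf[OF f])
  show ?thesis
  proof (rule ext_add[where g="\<lambda>y. tensor_id_f f (pt x y)" and h="\<lambda>y. pt x (f y)"])
    show "addf (\<lambda>y. tensor_id_f f (pt x y))"
      using addf_tif[of f] unfolding addf_def by (simp add: pt_add2)
    show "addf (\<lambda>y. pt x (f y))"
      using af unfolding addf_def by (simp add: pt_add2)
    fix k :: "'v \<times> 'v" and c
    obtain q r where k: "k = (q,r)" by (metis prod.exhaust)
    show "tensor_id_f f (pt x (Poly_Mapping.single k c)) = pt x (f (Poly_Mapping.single k c))"
    proof (rule ext_add[where g="\<lambda>x. tensor_id_f f (pt x (Poly_Mapping.single k c))" and h="\<lambda>x. pt x (f (Poly_Mapping.single k c))"])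
      show "addf (\<lambda>x. tensor_id_f f (pt x (Poly_Mapping.single k c)))"
        using addf_tif[of f] unfolding addf_def by (simp add: pt_add1)
      show "addf (\<lambda>x. pt x (f (Poly_Mapping.single k c)))"
        unfolding addf_def by (simp add: pt_add1)
      fix p d
      have "f (Poly_Mapping.single (q,r) (d * c)) = smult d (f (Poly_Mapping.single (q,r) c))"
        by (rule klinear_single[OF f])
      then show "tensor_id_f f (pt (Poly_Mapping.single p d) (Poly_Mapping.single k c)) = pt (Poly_Mapping.single p d) (f (Poly_Mapping.single k c))"
        by (simp add: k pt_single tif_single[OF f] pt_smult)
    qed
  qed
qed

lemma pt_assoc: "tpL (pt A B) C = pt A (pt B C)"
  by (rule poly_mapping_eqI) auto

lemma klinear_0: "klinear f \<Longrightarrow> f 0 = 0"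
  by (rule addf_0[OF klinear_addf])

lemma lb_00[simp]: "lb (0, 0) = 0"
  by (rule poly_mapping_eqI) (case_tac k, auto)

lemma t2_00[simp]: "t2 (0,0) v = 0" "t2 v' (0,0) = 0"
  by (simp_all add: t2_def)

lemma lb_add0: "lb (0, A + B) = lb (0, A) + lb (0, B)"
  by (rule poly_mapping_eqI) (case_tac k, auto simp: lookup_add)

lemma t2_add0: "t2 (0, A + B) v = t2 (0, A) v + t2 (0, B) v" "t2 v' (0, A + B) = t2 v' (0, A) + t2 v' (0, B)"
  by (simp_all add: t2_def lb_add0 pt_add1 pt_add2)

definition ce :: "'k::field \<Rightarrow> 'b option \<Rightarrow> 'k \<times> ('b \<Rightarrow>\<^sub>0 'k)" where
  "ce c i = (case i of None \<Rightarrow> (c, 0) | Some b \<Rightarrow> (0, Poly_Mapping.single b c))"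

lemma lb_ce: "lb (ce c i) = Poly_Mapping.single i c"
  by (rule poly_mapping_eqI) (auto simp: ce_def lookup_single when_def split: option.splits; case_tac k; auto)

lemma t2_ce: "t2 (ce c i1) (ce 1 i2) = Poly_Mapping.single (i1, i2) c"
  by (simp add: t2_def lb_ce pt_single)

definition swap :: "(('v \<times> 'v) \<Rightarrow>\<^sub>0 'k::field) \<Rightarrow> (('v \<times> 'v) \<Rightarrow>\<^sub>0 'k)" where
  "swap X = Abs_poly_mapping (\<lambda>(p,q). Poly_Mapping.lookup X (q,p))"

lemma lookup_swap[simp]: "Poly_Mapping.lookup (swap X) (p,q) = Poly_Mapping.lookup X (q,p)"
proof -
  have "{x. (\<lambda>(p,q). Poly_Mapping.lookup X (q,p)) x \<noteq> 0} \<subseteq> (\<lambda>(a,b). (b,a)) ` Poly_Mapping.keys X"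
    by (force simp: in_keys_iff image_iff)
  hence "finite {x. (\<lambda>(p,q). Poly_Mapping.lookup X (q,p)) x \<noteq> 0}"
    by (rule finite_subset) auto
  thus ?thesis unfolding swap_def by simp
qed

lemma swap_swap[simp]: "swap (swap X) = X"
  by (rule poly_mapping_eqI) (case_tac k, simp)
lemma swap_pt[simp]: "swap (pt A B) = pt B A"
  by (rule poly_mapping_eqI) (case_tac k, simp)
lemma swap_add: "swap (X + Y) = swap X + swap Y"
  by (rule poly_mapping_eqI) (case_tac k, simp add: lookup_add)
lemma swap_diff: "swap (X - Y) = swap X - swap Y"
  by (rule poly_mapping_eqI) (case_tac k, simp add: lookup_minus)

lemma addf_diff: "addf g \<Longrightarrow> g (a - b) = g a - g b"
  unfolding addf_def by (metis add_diff_cancel diff_add_cancel eq_diff_eq)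

context
  fixes br :: "('b \<Rightarrow>\<^sub>0 'k::field) \<Rightarrow> ('b \<Rightarrow>\<^sub>0 'k) \<Rightarrow> ('b \<Rightarrow>\<^sub>0 'k) \<Rightarrow> ('b \<Rightarrow>\<^sub>0 'k)"
    and R :: "((('b option \<times> 'b option) \<times> ('b option \<times> 'b option)) \<Rightarrow>\<^sub>0 'k) \<Rightarrow>
              ((('b option \<times> 'b option) \<times> ('b option \<times> 'b option)) \<Rightarrow>\<^sub>0 'k)"
  assumes L: "leibniz3 br"
    and lin: "klinear R"
    and H: "\<And>a1 x1 a2 x2 b1 y1 b2 y2.
           R (t4 (a1, x1) (a2, x2) (b1, y1) (b2, y2)) =
             t4 (b1, y1) (b2, y2) (a1, x1) (a2, x2)
           + t4 (1, 0) (1, 0) (0, br x1 y1 y2) (a2, x2)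
           + t4 (1, 0) (1, 0) (a1, x1) (0, br x2 y1 y2)"
begin

lemma br0[simp]: "br 0 y z = 0" "br x 0 z = 0" "br x y 0 = 0"
proof -
  have "klinear (\<lambda>x. br x y z)" "klinear (\<lambda>y. br x y z)" "klinear (\<lambda>z. br x y z)"
    using L by (simp_all add: leibniz3_def trilinear_def)
  from klinear_0[OF this(1)] klinear_0[OF this(2)] klinear_0[OF this(3)]
  show "br 0 y z = 0" "br x 0 z = 0" "br x y 0 = 0" by simp_all
qed

lemma HR: "R (pt (t2 (a1, x1) (a2, x2)) (t2 (b1, y1) (b2, y2))) =
             pt (t2 (b1, y1) (b2, y2)) (t2 (a1, x1) (a2, x2))
           + pt (t2 (1, 0) (1, 0)) (t2 (0, br x1 y1 y2) (a2, x2))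
           + pt (t2 (1, 0) (1, 0)) (t2 (a1, x1) (0, br x2 y1 y2))"
  using H by (simp add: t4_eq)

lemma Radd: "R (u + v) = R u + R v" using lin by (simp add: klinear_def)
lemma R0[simp]: "R 0 = 0" using lin by (rule klinear_0)

lemma tfi_add: "tensor_f_id R (u + v) = tensor_f_id R u + tensor_f_id R v"
  using addf_tfi[of R] by (simp add: addf_def)
lemma tif_add: "tensor_id_f R (u + v) = tensor_id_f R u + tensor_id_f R v"
  using addf_tif[of R] by (simp add: addf_def)
lemma tfi_0[simp]: "tensor_f_id R 0 = 0" by (rule addf_0[OF addf_tfi])
lemma tif_0[simp]: "tensor_id_f R 0 = 0" by (rule addf_0[OF addf_tif])

lemma tfi3: "tensor_f_id R (pt A (pt B C)) = tpL (R (pt A B)) C"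
  using tfi_tpL[OF lin, of "pt A B" C] by (simp add: pt_assoc)
lemma tif3: "tensor_id_f R (pt A (pt B C)) = pt A (R (pt B C))"
  by (rule tif_pt[OF lin])

lemma ybe_pure:
  "tensor_f_id R (tensor_id_f R (tensor_f_id R (pt (t2 (a1,x1) (a2,x2)) (pt (t2 (b1,y1) (b2,y2)) (t2 (c1,z1) (c2,z2)))))) =
   tensor_id_f R (tensor_f_id R (tensor_id_f R (pt (t2 (a1,x1) (a2,x2)) (pt (t2 (b1,y1) (b2,y2)) (t2 (c1,z1) (c2,z2))))))"
proof -
  have l: "br (br x y1 y2) z1 z2 = br (br x z1 z2) y1 y2 + br x (br y1 z1 z2) y2 + br x y1 (br y2 z1 z2)" for x
    using L unfolding leibniz3_def by blast
  show ?thesis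
    by (simp add: tfi3 tif3 HR tpL_add1 pt_assoc pt_add1 pt_add2 tfi_add tif_add Radd l t2_add0 add_ac)
qed

lemma ybe_single: "tensor_f_id R (tensor_id_f R (tensor_f_id R (Poly_Mapping.single (p,q,r) c))) =
   tensor_id_f R (tensor_f_id R (tensor_id_f R (Poly_Mapping.single (p,q,r) c)))"
proof -
  obtain i1 i2 where p: "p = (i1,i2)" by (metis prod.exhaust)
  obtain j1 j2 where q: "q = (j1,j2)" by (metis prod.exhaust)
  obtain k1 k2 where r: "r = (k1,k2)" by (metis prod.exhaust)
  have "Poly_Mapping.single (p,q,r) c = pt (t2 (ce c i1) (ce 1 i2)) (pt (t2 (ce 1 j1) (ce 1 j2)) (t2 (ce 1 k1) (ce 1 k2)))"
    by (simp add: t2_ce pt_single p q r)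
  then show ?thesis
    using ybe_pure[of "fst (ce c i1)" "snd (ce c i1)" "fst (ce 1 i2)" "snd (ce 1 i2)"
        "fst (ce 1 j1)" "snd (ce 1 j1)" "fst (ce 1 j2)" "snd (ce 1 j2)"
        "fst (ce 1 k1)" "snd (ce 1 k1)" "fst (ce 1 k2)" "snd (ce 1 k2)"]
    by simp
qed

lemma ybe_eq: "tensor_f_id R \<circ> tensor_id_f R \<circ> tensor_f_id R =
     tensor_id_f R \<circ> tensor_f_id R \<circ> tensor_id_f R"
proof
  fix T
  have "(tensor_f_id R \<circ> tensor_id_f R \<circ> tensor_f_id R) T = (tensor_id_f R \<circ> tensor_f_id R \<circ> tensor_id_f R) T"
  proof (rule ext_add[where g="tensor_f_id R \<circ> tensor_id_f R \<circ> tensor_f_id R" and h="tensor_id_f R \<circ> tensor_f_id R \<circ> tensor_id_f R"])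
    show "addf (tensor_f_id R \<circ> tensor_id_f R \<circ> tensor_f_id R)"
      by (intro addf_comp addf_tfi addf_tif)
    show "addf (tensor_id_f R \<circ> tensor_f_id R \<circ> tensor_id_f R)"
      by (intro addf_comp addf_tfi addf_tif)
    fix k :: "('b option \<times> 'b option) \<times> ('b option \<times> 'b option) \<times> ('b option \<times> 'b option)" and c :: 'k
    obtain p q r where "k = (p,q,r)" by (metis prod.exhaust)
    then show "(tensor_f_id R \<circ> tensor_id_f R \<circ> tensor_f_id R) (Poly_Mapping.single k c) =
      (tensor_id_f R \<circ> tensor_f_id R \<circ> tensor_id_f R) (Poly_Mapping.single k c)"
      using ybe_single by simp
  qed
  then show "(tensor_f_id R \<circ> tensor_id_f R \<circ> tensor_f_id R) T = (tensor_id_f R \<circ> tensor_f_id R \<circ> tensor_id_f R) T" .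
qed

definition "N X = R X - swap X"

lemma addf_N: "addf N"
  unfolding addf_def N_def by (simp add: Radd swap_add)

abbreviation "one \<equiv> t2 (1, 0) (1, 0)"

lemma N_single: "\<exists>s. N (Poly_Mapping.single k c) = pt one s"
proof -
  obtain i1 i2 j1 j2 where k: "k = ((i1,i2),(j1,j2))" by (metis prod.exhaust)
  have e: "Poly_Mapping.single k c = pt (t2 (ce c i1) (ce 1 i2)) (t2 (ce 1 j1) (ce 1 j2))"
    by (simp add: t2_ce pt_single k)
  show ?thesis
    using HR[of "fst (ce c i1)" "snd (ce c i1)" "fst (ce 1 i2)" "snd (ce 1 i2)"
        "fst (ce 1 j1)" "snd (ce 1 j1)" "fst (ce 1 j2)" "snd (ce 1 j2)"]
    unfolding N_def e by (auto simp: pt_add2[symmetric] add.assoc)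
qed

lemma N_form: "\<exists>s. N X = pt one s"
proof -
  have "\<forall>k. \<exists>s. N (Poly_Mapping.single k (Poly_Mapping.lookup X k)) = pt one s"
    using N_single by blast
  then obtain S where S: "\<And>k. N (Poly_Mapping.single k (Poly_Mapping.lookup X k)) = pt one (S k)"
    by metis
  have "N X = N (\<Sum>k\<in>Poly_Mapping.keys X. Poly_Mapping.single k (Poly_Mapping.lookup X k))"
    using decomp by metis
  also have "\<dots> = (\<Sum>k\<in>Poly_Mapping.keys X. pt one (S k))"
    by (simp add: addf_sum[OF addf_N] S)
  also have "\<dots> = pt one (\<Sum>k\<in>Poly_Mapping.keys X. S k)"
    by (rule addf_sum[symmetric]) (simp add: addf_def pt_add2)
  finally show ?thesis by blast
qed

lemma N_pt_one: "N (pt s one) = 0"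
proof -
  have "N (pt s one) = (\<lambda>_. 0) s"
  proof (rule ext_add[where g="\<lambda>s. N (pt s one)"])
    show "addf (\<lambda>s. N (pt s one))" using addf_N by (simp add: addf_def pt_add1)
    show "addf (\<lambda>s. 0 :: (('b option \<times> 'b option) \<times> ('b option \<times> 'b option)) \<Rightarrow>\<^sub>0 'k)"
      by (simp add: addf_def)
    fix k :: "'b option \<times> 'b option" and c :: 'k
    obtain i1 i2 where k: "k = (i1,i2)" by (metis prod.exhaust)
    have e: "Poly_Mapping.single k c = t2 (ce c i1) (ce 1 i2)"
      by (simp add: t2_ce k)
    show "N (pt (Poly_Mapping.single k c) one) = 0"
      using HR[of "fst (ce c i1)" "snd (ce c i1)" "fst (ce 1 i2)" "snd (ce 1 i2)" 1 0 1 0]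
      unfolding N_def e by simp
  qed
  thus ?thesis by simp
qed

lemma NN: "N (swap (N X)) = 0"
  using N_form[of X] N_pt_one by auto

lemma R_bij: "bij R"
proof (rule o_bij[where g="\<lambda>Y. swap (Y - N (swap Y))"])
  have R_eq: "R X = swap X + N X" for X by (simp add: N_def)
  show "(\<lambda>Y. swap (Y - N (swap Y))) \<circ> R = id"
  proof
    fix X
    have "N (swap (R X)) = N X"
      by (simp add: R_eq swap_add addf_N[unfolded addf_def] NN)
    then show "((\<lambda>Y. swap (Y - N (swap Y))) \<circ> R) X = id X"
      by (simp add: R_eq)
  qed
  show "R \<circ> (\<lambda>Y. swap (Y - N (swap Y))) = id"
  proof
    fix Y
    let ?Z = "Y - N (swap Y)"
    have "N (swap ?Z) = N (swap Y)"
      unfolding swap_diff addf_diff[OF addf_N] NN by simp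
    then show "(R \<circ> (\<lambda>Y. swap (Y - N (swap Y)))) Y = id Y"
      unfolding o_def R_eq[of "swap ?Z"] swap_swap by simp
  qed
qed

lemma yb: "yang_baxter R"
  unfolding yang_baxter_def using lin R_bij ybe_eq by blast

end


theorem proposition4p5:
  fixes br :: "('b \<Rightarrow>\<^sub>0 'k::field) \<Rightarrow> ('b \<Rightarrow>\<^sub>0 'k) \<Rightarrow> ('b \<Rightarrow>\<^sub>0 'k) \<Rightarrow> ('b \<Rightarrow>\<^sub>0 'k)"
    and R :: "((('b option \<times> 'b option) \<times> ('b option \<times> 'b option)) \<Rightarrow>\<^sub>0 'k) \<Rightarrow>
              ((('b option \<times> 'b option) \<times> ('b option \<times> 'b option)) \<Rightarrow>\<^sub>0 'k)"
  assumes "leibniz3 br"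
    and "klinear R"
    and "\<And>a1 x1 a2 x2 b1 y1 b2 y2.
           R (t4 (a1, x1) (a2, x2) (b1, y1) (b2, y2)) =
             t4 (b1, y1) (b2, y2) (a1, x1) (a2, x2)
           + t4 (1, 0) (1, 0) (0, br x1 y1 y2) (a2, x2)
           + t4 (1, 0) (1, 0) (a1, x1) (0, br x2 y1 y2)"
  shows "yang_baxter R"
  by (rule yb[OF assms])

end
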